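(* Let $\mathcal{D}$ be a symmetric operator on a Hilbert space $\mathcal{H}$, and suppose there exists an adequate approximate identity for $\mathcal{D}$. Then $\mathcal{D}$ is essentially self-adjoint.
   Context: A sequential approximate identity on a Hilbert $B$-module $E$ (here $B=\mathbb{C}$, $E=\mathcal{H}$) is a sequence of self-adjoint operators $\phi_k\in\mathrm{End}_B(E)$, $k\in\mathbb{N}$, converging strongly to the identity on $E$. For a symmetric operator $\mathcal{D}$ on $E$, an adequate approximate identity for $\mathcal{D}$ is a sequential approximate identity $\{\phi_k\}$ such that $\phi_k\cdot\mathrm{Dom}\,\mathcal{D}^*\subset\mathrm{Dom}\,\bar{\mathcal{D}}$, $[\bar{\mathcal{D}},\phi_k]$ is bounded on $\mathrm{Dom}\,\mathcal{D}$ for all $k$, and $\sup_k\|\overline{[\bar{\mathcal{D}},\phi_k]}\|<\infty$. *)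

theory Defs
  imports "HOL-Analysis.Analysis"
begin

class scaleC = scaleR +
  fixes scaleC :: "complex \<Rightarrow> 'a \<Rightarrow> 'a"
  assumes scaleR_scaleC: "scaleR r = scaleC (complex_of_real r)"

class complex_vector = scaleC + real_vector +
  assumes scaleC_add_right: "scaleC a (x + y) = scaleC a x + scaleC a y"
    and scaleC_add_left: "scaleC (a + b) x = scaleC a x + scaleC b x"
    and scaleC_scaleC: "scaleC a (scaleC b x) = scaleC (a * b) x"
    and scaleC_one: "scaleC 1 x = x"

class complex_inner = complex_vector + real_normed_vector +
  fixes cinner :: "'a \<Rightarrow> 'a \<Rightarrow> complex"
  assumes cinner_commute: "cinner x y = cnj (cinner y x)"
    and cinner_add_left: "cinner (x + y) z = cinner x z + cinner y z"
    and cinner_scaleC_left: "cinner (scaleC r x) y = cnj r * cinner x y"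
    and cinner_nonneg: "0 \<le> Re (cinner x x)"
    and cinner_eq_zero_iff: "cinner x x = 0 \<longleftrightarrow> x = 0"
    and norm_eq_sqrt_cinner: "norm x = sqrt (Re (cinner x x))"

section \<open>Unbounded operators, given as a domain S and a map T\<close>

definition csubspace :: "'a::complex_vector set \<Rightarrow> bool" where
  "csubspace S \<longleftrightarrow> 0 \<in> S \<and> (\<forall>x\<in>S. \<forall>y\<in>S. x + y \<in> S) \<and> (\<forall>c. \<forall>x\<in>S. scaleC c x \<in> S)"

definition clinear_on :: "'a::complex_vector set \<Rightarrow> ('a \<Rightarrow> 'b::complex_vector) \<Rightarrow> bool" where
  "clinear_on S T \<longleftrightarrow> csubspace S \<and> (\<forall>x\<in>S. \<forall>y\<in>S. T (x + y) = T x + T y)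
     \<and> (\<forall>c. \<forall>x\<in>S. T (scaleC c x) = scaleC c (T x))"

definition symmetric_op :: "'a::complex_inner set \<Rightarrow> ('a \<Rightarrow> 'a) \<Rightarrow> bool" where
  "symmetric_op S T \<longleftrightarrow> clinear_on S T \<and> closure S = UNIV
     \<and> (\<forall>x\<in>S. \<forall>y\<in>S. cinner (T x) y = cinner x (T y))"

definition adj_dom :: "'a::complex_inner set \<Rightarrow> ('a \<Rightarrow> 'a) \<Rightarrow> 'a set" where
  "adj_dom S T = {y. \<exists>z. \<forall>x\<in>S. cinner (T x) y = cinner x z}"

definition adj_op :: "'a::complex_inner set \<Rightarrow> ('a \<Rightarrow> 'a) \<Rightarrow> 'a \<Rightarrow> 'a" where
  "adj_op S T y = (SOME z. \<forall>x\<in>S. cinner (T x) y = cinner x z)"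

text \<open>Closure of an operator: closure of its graph (meaningful for closable operators).\<close>
definition graph_op :: "'a set \<Rightarrow> ('a \<Rightarrow> 'b) \<Rightarrow> ('a \<times> 'b) set" where
  "graph_op S T = {(x, T x) | x. x \<in> S}"

definition closure_dom :: "'a::complex_inner set \<Rightarrow> ('a \<Rightarrow> 'a) \<Rightarrow> 'a set" where
  "closure_dom S T = fst ` closure (graph_op S T)"

definition closure_op :: "'a::complex_inner set \<Rightarrow> ('a \<Rightarrow> 'a) \<Rightarrow> 'a \<Rightarrow> 'a" where
  "closure_op S T x = (THE z. (x, z) \<in> closure (graph_op S T))"

definition self_adjoint_op :: "'a::complex_inner set \<Rightarrow> ('a \<Rightarrow> 'a) \<Rightarrow> bool" where
  "self_adjoint_op S T \<longleftrightarrow> clinear_on S T \<and> closure S = UNIV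
     \<and> adj_dom S T = S \<and> (\<forall>x\<in>S. adj_op S T x = T x)"

definition ess_self_adjoint :: "'a::complex_inner set \<Rightarrow> ('a \<Rightarrow> 'a) \<Rightarrow> bool" where
  "ess_self_adjoint S T \<longleftrightarrow> self_adjoint_op (closure_dom S T) (closure_op S T)"

text \<open>Bounded self-adjoint operators on the whole space (End_B(E) with B = C).\<close>
definition bounded_selfadj :: "('a::complex_inner \<Rightarrow> 'a) \<Rightarrow> bool" where
  "bounded_selfadj A \<longleftrightarrow> clinear_on UNIV A \<and> (\<exists>K. \<forall>x. norm (A x) \<le> K * norm x)
     \<and> (\<forall>x y. cinner (A x) y = cinner x (A y))"

definition seq_approx_identity :: "(nat \<Rightarrow> 'a::complex_inner \<Rightarrow> 'a) \<Rightarrow> bool" where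
  "seq_approx_identity \<phi> \<longleftrightarrow> (\<forall>k. bounded_selfadj (\<phi> k)) \<and> (\<forall>x. (\<lambda>k. \<phi> k x) \<longlonglongrightarrow> x)"

text \<open>The commutator [closure D, phi_k] is evaluated on Dom D;
  the closure of a bounded densely defined operator has the same norm, so "bounded for each k
  with uniformly bounded closure norms" is expressed by a single uniform constant C.\<close>
definition adequate_approx_identity ::
    "'a::complex_inner set \<Rightarrow> ('a \<Rightarrow> 'a) \<Rightarrow> (nat \<Rightarrow> 'a \<Rightarrow> 'a) \<Rightarrow> bool" where
  "adequate_approx_identity S T \<phi> \<longleftrightarrow> seq_approx_identity \<phi>
     \<and> (\<forall>k. \<phi> k ` adj_dom S T \<subseteq> closure_dom S T)
     \<and> (\<exists>C. \<forall>k. \<forall>x\<in>S. norm (closure_op S T (\<phi> k x) - \<phi> k (T x)) \<le> C * norm x)"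

end

theory Submission
  imports Defs
begin


lemma scaleC_zero_right[simp]: "scaleC c (0::'a::complex_vector) = 0"
proof -
  have "scaleC c (0::'a) = scaleC c (0 + 0)" by simp
  also have "\<dots> = scaleC c 0 + scaleC c 0" by (rule scaleC_add_right)
  finally show ?thesis by simp
qed
lemma scaleC_minus_right: "scaleC c (- x) = - scaleC c x"
  for x :: "'a::complex_vector"
proof -
  have "scaleC c (- x) + scaleC c x = scaleC c (- x + x)" by (rule scaleC_add_right[symmetric])
  also have "\<dots> = 0" by simp
  finally show ?thesis by (rule eq_neg_iff_add_eq_0[THEN iffD2])
qed
lemma scaleC_diff_right: "scaleC c (x - y) = scaleC c x - scaleC c y"
  for x y :: "'a::complex_vector"
  by (simp only: diff_conv_add_uminus scaleC_add_right scaleC_minus_right)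

lemma cinner_add_right: "cinner x (y + z) = cinner x y + cinner x z"
  for x y z :: "'a::complex_inner"
proof -
  have "cinner x (y + z) = cnj (cinner (y + z) x)" by (rule cinner_commute)
  also have "\<dots> = cnj (cinner y x) + cnj (cinner z x)" by (simp add: cinner_add_left)
  finally show ?thesis by (simp flip: cinner_commute)
qed
lemma cinner_scaleC_right: "cinner x (scaleC r y) = r * cinner x y"
  for x y :: "'a::complex_inner"
proof -
  have "cinner x (scaleC r y) = cnj (cinner (scaleC r y) x)" by (rule cinner_commute)
  also have "\<dots> = r * cnj (cinner y x)" by (simp add: cinner_scaleC_left)
  finally show ?thesis by (simp flip: cinner_commute)
qed
lemma cinner_zero_left[simp]: "cinner 0 y = 0"
  for y :: "'a::complex_inner"
proof -
  have "cinner (0::'a) y = cinner (0 + 0) y" by simp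
  also have "\<dots> = cinner 0 y + cinner 0 y" by (rule cinner_add_left)
  finally show ?thesis by simp
qed
lemma cinner_zero_right[simp]: "cinner y 0 = 0"
  for y :: "'a::complex_inner"
  by (subst cinner_commute) simp
lemma cinner_minus_left: "cinner (- x) y = - cinner x y"
  for x y :: "'a::complex_inner"
proof -
  have "cinner x y + cinner (- x) y = cinner (x + - x) y" by (rule cinner_add_left[symmetric])
  also have "\<dots> = 0" by simp
  finally have "- cinner x y = cinner (- x) y" by (rule minus_unique)
  then show ?thesis by (rule sym)
qed
lemma cinner_minus_right: "cinner y (- x) = - cinner y x"
  for x y :: "'a::complex_inner"
  by (subst cinner_commute) (simp add: cinner_minus_left flip: cinner_commute)
lemma cinner_diff_left: "cinner (x - y) z = cinner x z - cinner y z"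
  for x y z :: "'a::complex_inner"
  by (simp only: diff_conv_add_uminus cinner_add_left cinner_minus_left)
lemma cinner_diff_right: "cinner z (x - y) = cinner z x - cinner z y"
  for x y z :: "'a::complex_inner"
  by (simp only: diff_conv_add_uminus cinner_add_right cinner_minus_right)
lemma cinner_scaleR_left: "cinner (scaleR r x) y = of_real r * cinner x y"
  for x y :: "'a::complex_inner"
  by (simp only: scaleR_scaleC cinner_scaleC_left complex_cnj_complex_of_real)
lemma cinner_scaleR_right: "cinner x (scaleR r y) = of_real r * cinner x y"
  for x y :: "'a::complex_inner"
  by (simp only: scaleR_scaleC cinner_scaleC_right)
lemma Im_cinner_self: "Im (cinner x x) = 0"
  for x :: "'a::complex_inner"
proof -
  have "cinner x x = cnj (cinner x x)" by (rule cinner_commute)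
  then have "Im (cinner x x) = Im (cnj (cinner x x))" by (rule arg_cong)
  then have "Im (cinner x x) = - Im (cinner x x)" by (simp only: cnj.sel(2))
  then show ?thesis by linarith
qed
lemma cinner_self: "cinner x x = of_real ((norm x)^2)"
  for x :: "'a::complex_inner"
proof -
  have "(norm x)^2 = (sqrt (Re (cinner x x)))^2" by (simp only: norm_eq_sqrt_cinner[of x])
  also have "\<dots> = Re (cinner x x)" using cinner_nonneg[of x] by simp
  finally have "(norm x)^2 = Re (cinner x x)" .
  then show ?thesis using Im_cinner_self by (simp add: complex_eq_iff)
qed
lemma Re_cinner_self: "Re (cinner x x) = (norm x)^2"
  for x :: "'a::complex_inner"
  by (simp add: cinner_self)
lemma Re_cinner_sym: "Re (cinner x y) = Re (cinner y x)"
  for x y :: "'a::complex_inner"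
  by (simp only: cinner_commute[of x y] cnj.sel(1))

lemma norm_diff_scaleR_sq:
  "(norm (q - scaleR t r))^2 = (norm q)^2 - 2 * t * Re (cinner q r) + t^2 * (norm r)^2"
  for q r :: "'a::complex_inner"
proof -
  have e: "cinner (q - scaleR t r) (q - scaleR t r) = cinner q q - of_real t * cinner q r - of_real t * cinner r q + of_real t * (of_real t * cinner r r)"
    by (simp only: cinner_diff_left cinner_diff_right cinner_scaleR_left cinner_scaleR_right) (simp add: algebra_simps)
  have "(norm (q - scaleR t r))^2 = Re (cinner (q - scaleR t r) (q - scaleR t r))"
    by (simp only: Re_cinner_self)
  also have "\<dots> = Re (cinner q q) - t * Re (cinner q r) - t * Re (cinner r q) + t * (t * Re (cinner r r))"
    unfolding e by simp
  finally have "(norm (q - scaleR t r))^2 = Re (cinner q q) - t * Re (cinner q r) - t * Re (cinner r q) + t * (t * Re (cinner r r))" .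
  moreover have "Re (cinner r q) = Re (cinner q r)" by (rule Re_cinner_sym)
  ultimately show ?thesis by (simp only: Re_cinner_self power2_eq_square)
qed

lemma cauchy_schwarz_Re: "\<bar>Re (cinner x y)\<bar> \<le> norm x * norm y"
  for x y :: "'a::complex_inner"
proof (cases "y = 0")
  case True then show ?thesis by simp
next
  case False
  define r where "r = Re (cinner x y)"
  define n where "n = (norm y)^2"
  have n0: "n > 0" using False by (simp add: n_def)
  define t where "t = r / n"
  have "0 \<le> (norm (x - scaleR t y))^2" by simp
  also have "\<dots> = (norm x)^2 - 2 * t * r + t^2 * n"
    by (simp only: norm_diff_scaleR_sq r_def n_def)
  also have "2 * t * r = 2 * (r^2 / n)" by (simp add: t_def power2_eq_square)
  also have "t^2 * n = r^2 / n" using n0 by (simp add: t_def power2_eq_square)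
  finally have "r^2 / n \<le> (norm x)^2" by simp
  then have "r^2 \<le> (norm x)^2 * n" using n0 by (simp add: divide_le_eq)
  also have "\<dots> = (norm x * norm y)^2" by (simp add: n_def power_mult_distrib)
  finally have "r^2 \<le> (norm x * norm y)^2" .
  then have "\<bar>r\<bar>^2 \<le> (norm x * norm y)^2" by simp
  then show ?thesis unfolding r_def
    by (rule power2_le_imp_le) simp
qed

lemma norm_scaleC: "norm (scaleC c x) = cmod c * norm x"
  for x :: "'a::complex_inner"
proof -
  have "cinner (scaleC c x) (scaleC c x) = (c * cnj c) * cinner x x"
    by (simp only: cinner_scaleC_left cinner_scaleC_right mult.assoc mult.left_commute)
  also have "\<dots> = of_real ((cmod c)^2) * of_real ((norm x)^2)"
    by (simp only: complex_norm_square cinner_self)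
  also have "\<dots> = of_real ((cmod c * norm x)^2)"
    by (simp only: of_real_mult power_mult_distrib)
  finally have "(norm (scaleC c x))^2 = (cmod c * norm x)^2"
    using Re_cinner_self[of "scaleC c x"] by simp
  then show ?thesis
    by (rule power2_eq_imp_eq) simp_all
qed

lemma cauchy_schwarz: "cmod (cinner x y) \<le> norm x * norm y"
  for x y :: "'a::complex_inner"
proof (cases "cinner x y = 0")
  case True then show ?thesis by simp
next
  case False
  define z where "z = cinner x y"
  have mz: "cmod z > 0" using False by (simp add: z_def)
  define u where "u = cnj z / of_real (cmod z)"
  have cu: "cmod u = 1" using mz by (simp add: u_def norm_divide)
  have "cinner x (scaleC u y) = u * z" by (simp add: cinner_scaleC_right z_def)
  also have "\<dots> = (z * cnj z) / of_real (cmod z)" by (simp add: u_def mult.commute)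
  also have "\<dots> = of_real ((cmod z)^2) / of_real (cmod z)" by (simp only: complex_norm_square)
  also have "\<dots> = of_real (cmod z)" using mz by (simp add: power2_eq_square)
  finally have "cmod z = Re (cinner x (scaleC u y))" by simp
  also have "\<dots> \<le> \<bar>Re (cinner x (scaleC u y))\<bar>" by (rule abs_ge_self)
  also have "\<dots> \<le> norm x * norm (scaleC u y)" by (rule cauchy_schwarz_Re)
  finally show ?thesis by (simp add: norm_scaleC cu z_def)
qed

lemma bounded_bilinear_cinner: "bounded_bilinear (cinner :: 'a::complex_inner \<Rightarrow> 'a \<Rightarrow> complex)"
proof
  show "\<exists>K. \<forall>a b. cmod (cinner a b) \<le> norm a * norm b * K"
    by (rule exI[of _ 1]) (simp add: cauchy_schwarz)
qed (auto simp: cinner_add_left cinner_add_right cinner_scaleR_left cinner_scaleR_right scaleR_conv_of_real)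

lemma bounded_linear_scaleC: "bounded_linear (scaleC c :: 'a::complex_inner \<Rightarrow> 'a)"
proof (rule bounded_linear_intro[where K="cmod c"])
  fix x y :: 'a and r :: real
  show "scaleC c (x + y) = scaleC c x + scaleC c y" by (rule scaleC_add_right)
  show "scaleC c (r *\<^sub>R x) = r *\<^sub>R scaleC c x"
    by (simp only: scaleR_scaleC scaleC_scaleC mult.commute)
  show "norm (scaleC c x) \<le> norm x * cmod c" by (simp add: norm_scaleC mult.commute)
qed

instantiation prod :: (complex_vector, complex_vector) complex_vector
begin
definition scaleC_prod_def: "scaleC c x = (scaleC c (fst x), scaleC c (snd x))"
instance
proof
  fix r :: real
  show "((*\<^sub>R) r :: 'a \<times> 'b \<Rightarrow> _) = scaleC (complex_of_real r)"
    by (rule ext) (simp only: scaleC_prod_def scaleR_prod_def scaleR_scaleC)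
next
  fix a b :: complex and x y :: "'a \<times> 'b"
  show "scaleC a (x + y) = scaleC a x + scaleC a y"
    by (simp only: scaleC_prod_def fst_add snd_add scaleC_add_right plus_prod_def fst_conv snd_conv)
  show "scaleC (a + b) x = scaleC a x + scaleC b x"
    by (simp only: scaleC_prod_def scaleC_add_left plus_prod_def fst_conv snd_conv)
  show "scaleC a (scaleC b x) = scaleC (a * b) x"
    by (simp only: scaleC_prod_def scaleC_scaleC fst_conv snd_conv)
  show "scaleC 1 x = x"
    by (simp only: scaleC_prod_def scaleC_one prod.collapse)
qed
end

instantiation prod :: (complex_inner, complex_inner) complex_inner
begin
definition cinner_prod_def: "cinner x y = cinner (fst x) (fst y) + cinner (snd x) (snd y)"
instance
proof
  fix x y z :: "'a \<times> 'b" and r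
  show "cinner x y = cnj (cinner y x)"
    by (simp only: cinner_prod_def complex_cnj_add cinner_commute[of "fst y"] cinner_commute[of "snd y"] complex_cnj_cnj)
  show "cinner (x + y) z = cinner x z + cinner y z"
    by (simp only: cinner_prod_def fst_add snd_add cinner_add_left add_ac)
  show "cinner (scaleC r x) y = cnj r * cinner x y"
    by (simp only: cinner_prod_def scaleC_prod_def fst_conv snd_conv cinner_scaleC_left distrib_left)
  show "0 \<le> Re (cinner x x)"
    by (simp add: cinner_prod_def Re_cinner_self)
  show "norm x = sqrt (Re (cinner x x))"
    by (simp add: cinner_prod_def Re_cinner_self norm_prod_def)
  show "(cinner x x = 0) = (x = 0)"
  proof
    assume h: "cinner x x = 0"
    have "Re (cinner x x) = 0" using h by simp
    then have "(norm (fst x))^2 + (norm (snd x))^2 = 0"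
      by (simp add: cinner_prod_def Re_cinner_self)
    then have "fst x = 0" "snd x = 0" by (simp_all add: add_nonneg_eq_0_iff)
    then show "x = 0" by (simp add: prod_eq_iff)
  qed (simp add: cinner_prod_def)
qed
end

lemma weak_limit_in_closed_convex:
  fixes G :: "'b::complex_inner set"
  assumes cl: "closed G" and cv: "convex G" and gG: "\<And>k. g k \<in> G"
    and gB: "\<And>k. norm (g k) \<le> B"
    and wk: "\<And>q. (\<lambda>k. Re (cinner q (g k))) \<longlonglongrightarrow> Re (cinner q p)"
  shows "p \<in> G"
proof (rule ccontr)
  assume pG: "p \<notin> G"
  have ne: "G \<noteq> {}" using gG by blast
  define d where "d = infdist p G"
  have d0: "d > 0" unfolding d_def using infdist_pos_not_in_closed[OF cl ne pG] .
  have B0: "B \<ge> 0" using gB[of 0] norm_ge_zero order_trans by blast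
  define R where "R = B + norm p + d + 2"
  have R0: "R > 0" "R > d" unfolding R_def using B0 d0 norm_ge_zero[of p] by linarith+
  define t where "t = d^2 / R^2"
  have t0: "t > 0" "t \<le> 1" using R0 d0 by (auto simp: t_def power_mono)
  define \<delta> where "\<delta> = min 1 (d^4 / (4*R^2*(2*d+1)))"
  have \<delta>0: "\<delta> > 0" "\<delta> \<le> 1" "\<delta> \<le> d^4 / (4*R^2*(2*d+1))" using d0 R0 by (auto simp: \<delta>_def)
  have "\<exists>h\<in>G. dist p h < d + \<delta>"
  proof (rule ccontr)
    assume "\<not> ?thesis"
    then have "d + \<delta> \<le> infdist p G"
      unfolding infdist_notempty[OF ne] by (intro cINF_greatest) (auto simp: ne not_less)
    then show False using \<delta>0 d_def by simp
  qed
  then obtain h where hG: "h \<in> G" and hd: "dist p h < d + \<delta>" by blast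
  define q where "q = p - h"
  have nq: "norm q < d + \<delta>" "d \<le> norm q"
    using hd infdist_le[OF hG, of p] by (auto simp: q_def d_def dist_norm)
  have "norm h \<le> norm p + norm q"
    using norm_triangle_ineq[of p "h - p"] by (simp add: q_def norm_minus_commute)
  then have nh: "norm h \<le> norm p + d + 1" using nq \<delta>0 by linarith
  have ineq: "d^2 \<le> (d+\<delta>)^2 - 2 * t * Re (cinner q (g k - h)) + t^2 * R^2" for k
  proof -
    have "(1 - t) *\<^sub>R h + t *\<^sub>R g k \<in> G" using convexD_alt[OF cv hG gG t0(1)[THEN less_imp_le] t0(2)] .
    then have m0: "d \<le> dist p ((1 - t) *\<^sub>R h + t *\<^sub>R g k)" unfolding d_def by (rule infdist_le)
    have eqd: "dist p ((1 - t) *\<^sub>R h + t *\<^sub>R g k) = norm (q - t *\<^sub>R (g k - h))"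
      by (simp add: dist_norm q_def algebra_simps)
    have m: "d^2 \<le> (norm (q - t *\<^sub>R (g k - h)))^2"
      using m0 eqd d0 by (simp add: power_mono)
    have e: "(norm (q - t *\<^sub>R (g k - h)))^2 = (norm q)^2 - 2 * t * Re (cinner q (g k - h)) + t^2 * (norm (g k - h))^2"
      by (rule norm_diff_scaleR_sq)
    have a1: "(norm q)^2 \<le> (d+\<delta>)^2" using nq d0 by (simp add: power_mono)
    have "norm (g k - h) \<le> B + (norm p + d + 1)"
      using norm_triangle_ineq4[of "g k" h] gB[of k] nh by linarith
    also have "\<dots> \<le> R" by (simp add: R_def)
    finally have a2: "(norm (g k - h))^2 \<le> R^2" by (simp add: power_mono)
    have a3: "t^2 * (norm (g k - h))^2 \<le> t^2 * R^2"
      by (rule mult_left_mono[OF a2]) simp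
    show ?thesis using m e a1 a3 by linarith
  qed
  have lim: "(\<lambda>k. (d+\<delta>)^2 - 2 * t * Re (cinner q (g k - h)) + t^2 * R^2)
      \<longlonglongrightarrow> (d+\<delta>)^2 - 2 * t * (Re (cinner q p) - Re (cinner q h)) + t^2 * R^2"
  proof -
    have "(\<lambda>k. Re (cinner q (g k - h))) \<longlonglongrightarrow> Re (cinner q p) - Re (cinner q h)"
      using tendsto_diff[OF wk[of q] tendsto_const[of "Re (cinner q h)"]] by (simp add: cinner_diff_right)
    then show ?thesis by (intro tendsto_intros)
  qed
  have "d^2 \<le> (d+\<delta>)^2 - 2 * t * (Re (cinner q p) - Re (cinner q h)) + t^2 * R^2"
    by (rule tendsto_lowerbound[OF lim]) (auto simp: ineq)
  moreover have "Re (cinner q p) - Re (cinner q h) = (norm q)^2"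
    by (simp add: q_def cinner_diff_right cinner_diff_left Re_cinner_self[symmetric] Re_cinner_sym[of h p])
  moreover have "d^2 \<le> (norm q)^2" using nq d0 by (simp add: power_mono)
  ultimately have f1: "d^2 \<le> (d+\<delta>)^2 - 2 * t * (norm q)^2 + t^2 * R^2" by simp
  have f2: "2 * t * d^2 \<le> 2 * t * (norm q)^2"
    using \<open>d^2 \<le> (norm q)^2\<close> t0 by simp
  have f3: "(d+\<delta>)^2 = d^2 + 2*d*\<delta> + \<delta>^2" by (simp add: power2_sum)
  have "2 * t * d^2 - t^2 * R^2 \<le> 2*d*\<delta> + \<delta>^2" using f1 f2 f3 by linarith
  moreover have "2 * t * d^2 - t^2 * R^2 = d^4 / R^2"
  proof -
    have d4: "d^4 = d*(d*(d*d))" by (simp add: eval_nat_numeral)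
    show ?thesis using R0 by (simp add: t_def field_simps power2_eq_square d4)
  qed
  moreover have "2*d*\<delta> + \<delta>^2 \<le> \<delta> * (2*d+1)"
    using \<delta>0 by (simp add: power2_eq_square algebra_simps mult_left_mono)
  moreover have "\<delta> * (2*d+1) \<le> d^4 / (4*R^2)"
  proof -
    have pos: "2*d+1 > 0" using d0 by simp
    have "\<delta> * (2*d+1) \<le> d^4/(4*R^2*(2*d+1)) * (2*d+1)"
      using \<delta>0(3) pos by (intro mult_right_mono) auto
    also have "\<dots> = d^4/(4*R^2)" using pos by simp
    finally show ?thesis .
  qed
  moreover have "d^4 / (4*R^2) < d^4 / R^2"
    using d0 R0 by (simp add: field_simps)
  ultimately show False by linarith
qed



lemma tendsto_cinner:
  fixes f g :: "nat \<Rightarrow> 'a::complex_inner"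
  assumes "f \<longlonglongrightarrow> a" "g \<longlonglongrightarrow> b"
  shows "(\<lambda>n. cinner (f n) (g n)) \<longlonglongrightarrow> cinner a b"
  using bounded_bilinear.tendsto[OF bounded_bilinear_cinner assms] .

lemma dense_orth_zero:
  fixes S :: "'a::complex_inner set"
  assumes "closure S = UNIV" "\<And>u. u \<in> S \<Longrightarrow> cinner u v = 0"
  shows "v = 0"
proof -
  have "v \<in> closure S" using assms(1) by simp
  then obtain u where uS: "\<And>n. u n \<in> S" and lim: "u \<longlonglongrightarrow> v"
    unfolding closure_sequential by blast
  have "(\<lambda>n. cinner (u n) v) \<longlonglongrightarrow> cinner v v"
    by (rule tendsto_cinner[OF lim tendsto_const])
  moreover have "(\<lambda>n. cinner (u n) v) = (\<lambda>n. 0)" using uS assms(2) by simp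
  ultimately have "cinner v v = 0" using LIMSEQ_unique tendsto_const by metis
  then show ?thesis by (simp add: cinner_eq_zero_iff)
qed

lemma graph_seqE:
  assumes "p \<in> graph_op S T"
  shows "fst p \<in> S" "snd p = T (fst p)"
  using assms by (auto simp: graph_op_def)

lemma adj_limit:
  fixes S :: "'a::complex_inner set"
  assumes adj: "\<And>u. u \<in> S \<Longrightarrow> cinner (T u) y = cinner u w"
    and ab: "(a, b) \<in> closure (graph_op S T)"
  shows "cinner b y = cinner a w"
proof -
  obtain s where sG: "\<And>n. s n \<in> graph_op S T" and lim: "s \<longlonglongrightarrow> (a, b)"
    using ab unfolding closure_sequential by blast
  have l1: "(\<lambda>n. cinner (snd (s n)) y) \<longlonglongrightarrow> cinner b y"
    using tendsto_cinner[OF tendsto_snd[OF lim] tendsto_const] by simp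
  have l2: "(\<lambda>n. cinner (fst (s n)) w) \<longlonglongrightarrow> cinner a w"
    using tendsto_cinner[OF tendsto_fst[OF lim] tendsto_const] by simp
  have "(\<lambda>n. cinner (snd (s n)) y) = (\<lambda>n. cinner (fst (s n)) w)"
    using graph_seqE[OF sG] adj by simp
  with l1 l2 show ?thesis using LIMSEQ_unique by metis
qed

lemma csubspace_closure:
  fixes A :: "'b::complex_inner set"
  assumes "csubspace A"
  shows "csubspace (closure A)"
  unfolding csubspace_def
proof (intro conjI ballI allI)
  show "0 \<in> closure A" using assms closure_subset unfolding csubspace_def by blast
next
  fix x y assume "x \<in> closure A" "y \<in> closure A"
  then obtain s t where s: "\<And>n. s n \<in> A" "s \<longlonglongrightarrow> x" and t: "\<And>n. t n \<in> A" "t \<longlonglongrightarrow> y"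
    unfolding closure_sequential by blast
  have "\<And>n. s n + t n \<in> A" using s t assms unfolding csubspace_def by blast
  moreover have "(\<lambda>n. s n + t n) \<longlonglongrightarrow> x + y" using s t by (intro tendsto_add) auto
  ultimately show "x + y \<in> closure A" unfolding closure_sequential
    by (intro exI[of _ "\<lambda>n. s n + t n"] conjI allI) auto
next
  fix c x assume "x \<in> closure A"
  then obtain s where s: "\<And>n. s n \<in> A" "s \<longlonglongrightarrow> x"
    unfolding closure_sequential by blast
  have "\<And>n. scaleC c (s n) \<in> A" using s assms unfolding csubspace_def by blast
  moreover have "(\<lambda>n. scaleC c (s n)) \<longlonglongrightarrow> scaleC c x"
    using bounded_linear.tendsto[OF bounded_linear_scaleC s(2)] .
  ultimately show "scaleC c x \<in> closure A" unfolding closure_sequential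
    by (intro exI[of _ "\<lambda>n. scaleC c (s n)"] conjI allI) auto
qed

lemma csubspace_convex:
  fixes A :: "'b::complex_inner set"
  assumes "csubspace A"
  shows "convex A"
proof (rule convexI)
  fix x y u v assume "x \<in> A" "y \<in> A"
  then have "scaleC (of_real u) x \<in> A" "scaleC (of_real v) y \<in> A"
    using assms unfolding csubspace_def by blast+
  then have "scaleC (of_real u) x + scaleC (of_real v) y \<in> A"
    using assms unfolding csubspace_def by blast
  then show "u *\<^sub>R x + v *\<^sub>R y \<in> A" by (simp only: scaleR_scaleC)
qed

lemma scaleC_prod_simp: "scaleC c (a, b) = (scaleC c a, scaleC c b)"
  by (simp add: scaleC_prod_def)

lemma csubspace_graph:
  fixes S :: "'a::complex_inner set"
  assumes "clinear_on S T"
  shows "csubspace (graph_op S T)"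
  unfolding csubspace_def
proof (intro conjI ballI allI)
  have S: "csubspace S" and add: "\<And>x y. x \<in> S \<Longrightarrow> y \<in> S \<Longrightarrow> T (x + y) = T x + T y"
    and sc: "\<And>c x. x \<in> S \<Longrightarrow> T (scaleC c x) = scaleC c (T x)"
    using assms unfolding clinear_on_def by blast+
  have z: "0 \<in> S" using S unfolding csubspace_def by blast
  have "T 0 = T 0 + T 0" using add[OF z z] by simp
  then have "T 0 = 0" by simp
  with z show "0 \<in> graph_op S T" unfolding graph_op_def by (auto simp: zero_prod_def)
  fix p q assume "p \<in> graph_op S T" "q \<in> graph_op S T"
  then obtain x y where "p = (x, T x)" "q = (y, T y)" "x \<in> S" "y \<in> S"
    unfolding graph_op_def by blast
  moreover have "x + y \<in> S" using S \<open>x \<in> S\<close> \<open>y \<in> S\<close> unfolding csubspace_def by blast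
  ultimately show "p + q \<in> graph_op S T" unfolding graph_op_def using add by force
next
  have S: "csubspace S"
    and sc: "\<And>c x. x \<in> S \<Longrightarrow> T (scaleC c x) = scaleC c (T x)"
    using assms unfolding clinear_on_def by blast+
  fix c p assume "p \<in> graph_op S T"
  then obtain x where "p = (x, T x)" "x \<in> S"
    unfolding graph_op_def by blast
  moreover have "scaleC c x \<in> S" using S \<open>x \<in> S\<close> unfolding csubspace_def by blast
  ultimately show "scaleC c p \<in> graph_op S T" unfolding graph_op_def using sc
    by (force simp: scaleC_prod_simp)
qed


lemma weak_conv_dense:
  fixes a :: "nat \<Rightarrow> 'a::complex_inner"
  assumes dense: "closure S = UNIV" and bnd: "\<And>k. norm (a k) \<le> M"
    and conv: "\<And>x. x \<in> S \<Longrightarrow> (\<lambda>k. cinner (a k) x) \<longlonglongrightarrow> cinner b x"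
  shows "(\<lambda>k. cinner (a k) v) \<longlonglongrightarrow> cinner b v"
proof (rule LIMSEQ_I)
  fix r :: real assume r: "r > 0"
  have M0: "M \<ge> 0" using bnd[of 0] norm_ge_zero order_trans by blast
  define \<delta> where "\<delta> = r / (3 * (M + norm b + 1))"
  have pos3: "3 * (M + norm b + 1) > 0" using M0 norm_ge_zero[of b] by (smt (verit))
  have \<delta>0: "\<delta> > 0" unfolding \<delta>_def by (rule divide_pos_pos[OF r pos3])
  have "v \<in> closure S" using dense by simp
  then obtain x where xS: "x \<in> S" and xv: "dist x v < \<delta>"
    using \<delta>0 unfolding closure_approachable by blast
  have nxv: "norm (v - x) < \<delta>" using xv by (simp add: dist_norm norm_minus_commute)
  obtain N where N: "\<And>n. n \<ge> N \<Longrightarrow> norm (cinner (a n) x - cinner b x) < r / 3"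
    using LIMSEQ_D[OF conv[OF xS], of "r/3"] r by auto
  have key: "(M + norm b) * \<delta> < r / 3"
  proof -
    have "(M + norm b) * \<delta> = r / 3 * ((M + norm b) / (M + norm b + 1))"
      using M0 by (simp add: \<delta>_def field_simps)
    also have "\<dots> < r / 3 * 1"
      using M0 r by (intro mult_strict_left_mono) (simp_all add: divide_less_eq add_nonneg_pos)
    finally show ?thesis by simp
  qed
  show "\<exists>N. \<forall>n\<ge>N. norm (cinner (a n) v - cinner b v) < r"
  proof (intro exI allI impI)
    fix n assume n: "n \<ge> N"
    have eq: "cinner (a n) v - cinner b v = cinner (a n) (v - x) + (cinner (a n) x - cinner b x) + cinner b (x - v)"
      by (simp add: cinner_diff_right)
    have t1: "norm (cinner (a n) (v - x)) \<le> M * \<delta>"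
    proof -
      have "norm (cinner (a n) (v - x)) \<le> norm (a n) * norm (v - x)" by (rule cauchy_schwarz)
      also have "\<dots> \<le> M * \<delta>" using bnd[of n] nxv M0 by (intro mult_mono) auto
      finally show ?thesis .
    qed
    have t3: "norm (cinner b (x - v)) \<le> norm b * \<delta>"
    proof -
      have "norm (cinner b (x - v)) \<le> norm b * norm (x - v)" by (rule cauchy_schwarz)
      also have "\<dots> \<le> norm b * \<delta>" using nxv by (intro mult_left_mono) (auto simp: norm_minus_commute)
      finally show ?thesis .
    qed
    have "norm (cinner (a n) v - cinner b v) \<le> norm (cinner (a n) (v - x)) + norm (cinner (a n) x - cinner b x) + norm (cinner b (x - v))"
      unfolding eq by (rule order_trans[OF norm_triangle_ineq add_right_mono[OF norm_triangle_ineq]])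
    also have "\<dots> < M * \<delta> + r / 3 + norm b * \<delta>" using t1 t3 N[OF n] by linarith
    also have "\<dots> = (M + norm b) * \<delta> + r / 3" by (simp add: algebra_simps)
    also have "\<dots> < r" using key r by linarith
    finally show "norm (cinner (a n) v - cinner b v) < r" .
  qed
qed

context
  fixes S :: "'a::{complex_inner, complete_space} set" and T :: "'a \<Rightarrow> 'a"
  assumes sym: "symmetric_op S T"
begin

lemma sym_lin: "clinear_on S T" and sym_dense: "closure S = UNIV"
  and sym_herm: "\<And>x y. x \<in> S \<Longrightarrow> y \<in> S \<Longrightarrow> cinner (T x) y = cinner x (T y)"
  using sym unfolding symmetric_op_def by blast+

lemma G_sym_S:
  assumes "(a, b) \<in> closure (graph_op S T)" "x \<in> S"
  shows "cinner b x = cinner a (T x)"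
  using adj_limit[OF _ assms(1), of x "T x"] sym_herm assms(2) by blast

lemma G_unique:
  assumes "(x, z1) \<in> closure (graph_op S T)" "(x, z2) \<in> closure (graph_op S T)"
  shows "z1 = z2"
proof -
  have "cinner u (z1 - z2) = 0" if u: "u \<in> S" for u
  proof -
    have "cinner z1 u = cinner z2 u" using G_sym_S[OF assms(1) u] G_sym_S[OF assms(2) u] by simp
    moreover have "cinner u z1 = cnj (cinner z1 u)" by (rule cinner_commute)
    moreover have "cinner u z2 = cnj (cinner z2 u)" by (rule cinner_commute)
    ultimately have "cinner u z1 = cinner u z2" by simp
    then show ?thesis by (simp add: cinner_diff_right)
  qed
  then have "z1 - z2 = 0" using dense_orth_zero[OF sym_dense] by blast
  then show ?thesis by simp
qed

lemma cop_eq: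
  assumes "(x, z) \<in> closure (graph_op S T)"
  shows "closure_op S T x = z"
  unfolding closure_op_def
  by (rule the_equality) (auto intro: assms G_unique[OF _ assms])

lemma cop_mem:
  assumes "x \<in> closure_dom S T"
  shows "(x, closure_op S T x) \<in> closure (graph_op S T)"
proof -
  obtain p where p: "p \<in> closure (graph_op S T)" "x = fst p"
    using assms unfolding closure_dom_def by (rule imageE)
  define z where "z = snd p"
  have z: "(x, z) \<in> closure (graph_op S T)" using p by (simp add: z_def)
  then have "closure_op S T x = z" by (rule cop_eq)
  then show ?thesis using z by simp
qed

lemma S_G: "x \<in> S \<Longrightarrow> (x, T x) \<in> closure (graph_op S T)"
proof -
  assume "x \<in> S"
  then have "(x, T x) \<in> graph_op S T" unfolding graph_op_def by blast
  then show ?thesis by (rule subsetD[OF closure_subset])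
qed

lemma S_cdom: "S \<subseteq> closure_dom S T"
proof
  fix x assume "x \<in> S"
  then have "(x, T x) \<in> closure (graph_op S T)" by (rule S_G)
  then have "fst (x, T x) \<in> fst ` closure (graph_op S T)" by (rule imageI)
  then show "x \<in> closure_dom S T" by (simp add: closure_dom_def)
qed

lemma cop_S: "x \<in> S \<Longrightarrow> closure_op S T x = T x"
  by (rule cop_eq[OF S_G])

lemma Gamma_sub: "csubspace (closure (graph_op S T))"
  by (rule csubspace_closure[OF csubspace_graph[OF sym_lin]])

lemma S_in_adj: "S \<subseteq> adj_dom S T"
proof
  fix y assume "y \<in> S"
  then have "\<forall>x\<in>S. cinner (T x) y = cinner x (T y)" using sym_herm by blast
  then show "y \<in> adj_dom S T" unfolding adj_dom_def by blast
qed

end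



lemma core:
  fixes S :: "'a::{complex_inner, complete_space} set" and T :: "'a \<Rightarrow> 'a"
  assumes sym: "symmetric_op S T" and ad: "adequate_approx_identity S T \<phi>"
    and yA: "y \<in> adj_dom S T"
  shows "y \<in> closure_dom S T"
proof -
  let ?G = "closure (graph_op S T)"
  have sa: "\<And>k. bounded_selfadj (\<phi> k)" and conv: "\<And>x. (\<lambda>k. \<phi> k x) \<longlonglongrightarrow> x"
    using ad unfolding adequate_approx_identity_def seq_approx_identity_def by blast+
  have into: "\<And>k x. x \<in> adj_dom S T \<Longrightarrow> \<phi> k x \<in> closure_dom S T"
    using ad unfolding adequate_approx_identity_def by blast
  obtain C where C: "\<And>k x. x \<in> S \<Longrightarrow> norm (closure_op S T (\<phi> k x) - \<phi> k (T x)) \<le> C * norm x"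
    using ad unfolding adequate_approx_identity_def by blast
  have selfadj: "\<And>k x z. cinner (\<phi> k x) z = cinner x (\<phi> k z)"
    using sa unfolding bounded_selfadj_def by blast
  obtain w where yw: "\<And>u. u \<in> S \<Longrightarrow> cinner (T u) y = cinner u w"
    using yA unfolding adj_dom_def by blast
  define yk where "yk = (\<lambda>k. \<phi> k y)"
  define zk where "zk = (\<lambda>k. closure_op S T (\<phi> k y))"
  have G1: "(yk k, zk k) \<in> ?G" for k
    unfolding yk_def zk_def by (rule cop_mem[OF sym into[OF yA]])
  have Gx: "(\<phi> k x, closure_op S T (\<phi> k x)) \<in> ?G" if "x \<in> S" for k x
    using that S_in_adj[OF sym] by (intro cop_mem[OF sym into]) blast
  have key: "cinner (zk k) x = cinner (\<phi> k w) x - cinner y (closure_op S T (\<phi> k x) - \<phi> k (T x))"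
    if xS: "x \<in> S" for k x
  proof -
    have e1: "cinner (zk k) x = cinner y (\<phi> k (T x))"
      using G_sym_S[OF sym G1 xS] selfadj by (simp add: yk_def)
    have "cinner (closure_op S T (\<phi> k x)) y = cinner (\<phi> k x) w"
      by (rule adj_limit[OF yw Gx[OF xS]])
    then have "cnj (cinner (closure_op S T (\<phi> k x)) y) = cnj (cinner (\<phi> k x) w)" by simp
    then have "cinner y (closure_op S T (\<phi> k x)) = cinner w (\<phi> k x)"
      by (simp only: cinner_commute[of y] cinner_commute[of w])
    also have "\<dots> = cinner (\<phi> k w) x" by (simp only: selfadj)
    finally have e2: "cinner y (closure_op S T (\<phi> k x)) = cinner (\<phi> k w) x" .
    show ?thesis using e1 e2 by (simp add: cinner_diff_right)
  qed
  have "Bseq (\<lambda>k. \<phi> k w)" using conv[of w] by (intro convergent_imp_Bseq convergentI)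
  then obtain Kw where "\<forall>k. norm (\<phi> k w) \<le> Kw" unfolding Bseq_def by blast
  then have Kw: "\<And>k. norm (\<phi> k w) \<le> Kw" by blast
  have "Bseq yk" using conv[of y] unfolding yk_def by (intro convergent_imp_Bseq convergentI)
  then obtain Ky where "\<forall>k. norm (yk k) \<le> Ky" unfolding Bseq_def by blast
  then have Ky: "\<And>k. norm (yk k) \<le> Ky" by blast
  have Kw0: "Kw \<ge> 0" using Kw[of 0] norm_ge_zero order_trans by blast
  define M where "M = Kw + norm y * max C 0"
  have M0: "M \<ge> 0" unfolding M_def using Kw0 by simp
  have bS: "norm (cinner (zk k) x) \<le> M * norm x" if xS: "x \<in> S" for k x
  proof -
    have a: "norm (cinner (\<phi> k w) x) \<le> Kw * norm x"
      using cauchy_schwarz[of "\<phi> k w" x] Kw[of k] by (meson mult_right_mono norm_ge_zero order_trans)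
    have "norm (cinner y (closure_op S T (\<phi> k x) - \<phi> k (T x))) \<le> norm y * norm (closure_op S T (\<phi> k x) - \<phi> k (T x))"
      by (rule cauchy_schwarz)
    also have "\<dots> \<le> norm y * (max C 0 * norm x)"
    proof (rule mult_left_mono)
      show "norm (closure_op S T (\<phi> k x) - \<phi> k (T x)) \<le> max C 0 * norm x"
        using C[OF xS, of k] by (meson max.cobounded1 mult_right_mono norm_ge_zero order_trans)
    qed simp
    finally have b: "norm (cinner y (closure_op S T (\<phi> k x) - \<phi> k (T x))) \<le> norm y * max C 0 * norm x"
      by (simp add: mult.assoc)
    have "norm (cinner (zk k) x) \<le> norm (cinner (\<phi> k w) x) + norm (cinner y (closure_op S T (\<phi> k x) - \<phi> k (T x)))"
      unfolding key[OF xS] by (rule norm_triangle_ineq4)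
    also have "\<dots> \<le> Kw * norm x + norm y * max C 0 * norm x" using a b by linarith
    also have "\<dots> = M * norm x" by (simp add: M_def algebra_simps)
    finally show ?thesis .
  qed
  have nz: "norm (zk k) \<le> M" for k
  proof -
    have "zk k \<in> closure S" using sym_dense[OF sym] by simp
    then obtain u where uS: "\<And>n. u n \<in> S" and ul: "u \<longlonglongrightarrow> zk k"
      unfolding closure_sequential by blast
    have l1: "(\<lambda>n. norm (cinner (zk k) (u n))) \<longlonglongrightarrow> norm (cinner (zk k) (zk k))"
      by (intro tendsto_norm tendsto_cinner[OF tendsto_const ul])
    have l2: "(\<lambda>n. M * norm (u n)) \<longlonglongrightarrow> M * norm (zk k)"
      by (intro tendsto_mult tendsto_const tendsto_norm ul)
    have "norm (cinner (zk k) (zk k)) \<le> M * norm (zk k)"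
      by (rule LIMSEQ_le[OF l1 l2]) (auto intro: bS[OF uS])
    moreover have "norm (cinner (zk k) (zk k)) = (norm (zk k))^2"
      by (simp only: cinner_self norm_of_real) simp
    ultimately have sq: "norm (zk k) * norm (zk k) \<le> M * norm (zk k)"
      by (simp add: power2_eq_square)
    show ?thesis
    proof (cases "norm (zk k) = 0")
      case True then show ?thesis using M0 by simp
    next
      case False
      then have "norm (zk k) > 0" by simp
      then show ?thesis using sq by simp
    qed
  qed
  have wS: "(\<lambda>k. cinner (zk k) x) \<longlonglongrightarrow> cinner w x" if xS: "x \<in> S" for x
  proof -
    have "(\<lambda>k. cinner (zk k) x) = (\<lambda>k. cinner (yk k) (T x))"
      using G_sym_S[OF sym G1 xS] by simp
    moreover have "(\<lambda>k. cinner (yk k) (T x)) \<longlonglongrightarrow> cinner y (T x)"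
      using conv[of y] unfolding yk_def by (intro tendsto_cinner tendsto_const)
    moreover have "cinner y (T x) = cinner w x"
    proof -
      have "cinner y (T x) = cnj (cinner (T x) y)" by (rule cinner_commute)
      also have "\<dots> = cnj (cinner x w)" using yw[OF xS] by simp
      also have "\<dots> = cinner w x" by (simp only: cinner_commute[of w x])
      finally show ?thesis .
    qed
    ultimately show ?thesis by simp
  qed
  have wall: "(\<lambda>k. cinner (zk k) v) \<longlonglongrightarrow> cinner w v" for v
    by (rule weak_conv_dense[OF sym_dense[OF sym] nz wS])
  have "(y, w) \<in> ?G"
  proof (rule weak_limit_in_closed_convex[where g="\<lambda>k. (yk k, zk k)" and B="Ky + M"])
    show "closed ?G" by simp
    show "convex ?G" by (rule csubspace_convex[OF Gamma_sub[OF sym]])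
    show "(yk k, zk k) \<in> ?G" for k by (rule G1)
    show "norm (yk k, zk k) \<le> Ky + M" for k
      using norm_Pair_le[of "yk k" "zk k"] Ky[of k] nz[of k] by linarith
    fix q :: "'a \<times> 'a"
    have t1: "(\<lambda>k. cinner (fst q) (yk k)) \<longlonglongrightarrow> cinner (fst q) y"
      using conv[of y] unfolding yk_def by (intro tendsto_cinner tendsto_const)
    have t2: "(\<lambda>k. cnj (cinner (zk k) (snd q))) \<longlonglongrightarrow> cnj (cinner w (snd q))"
      by (intro tendsto_cnj wall)
    have "(\<lambda>k. Re (cinner (fst q) (yk k) + cnj (cinner (zk k) (snd q))))
        \<longlonglongrightarrow> Re (cinner (fst q) y + cnj (cinner w (snd q)))"
      by (intro tendsto_Re tendsto_add t1 t2)
    moreover have "\<And>k. cinner q (yk k, zk k) = cinner (fst q) (yk k) + cnj (cinner (zk k) (snd q))"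
      by (simp only: cinner_prod_def fst_conv snd_conv cinner_commute[of "zk _"] complex_cnj_cnj)
    moreover have "cinner q (y, w) = cinner (fst q) y + cnj (cinner w (snd q))"
      by (simp only: cinner_prod_def fst_conv snd_conv cinner_commute[of w] complex_cnj_cnj)
    ultimately show "(\<lambda>k. Re (cinner q (yk k, zk k))) \<longlonglongrightarrow> Re (cinner q (y, w))" by simp
  qed
  then have "fst (y, w) \<in> fst ` ?G" by (rule imageI)
  then show ?thesis by (simp add: closure_dom_def)
qed


lemma adjrel:
  fixes S :: "'a::{complex_inner, complete_space} set" and T :: "'a \<Rightarrow> 'a"
  assumes sym: "symmetric_op S T" and yD: "y \<in> closure_dom S T" and xD: "x \<in> closure_dom S T"
  shows "cinner (closure_op S T x) y = cinner x (closure_op S T y)"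
proof -
  have hyp: "cinner (T u) y = cinner u (closure_op S T y)" if uS: "u \<in> S" for u
  proof -
    have "cinner (closure_op S T y) u = cinner y (T u)" by (rule G_sym_S[OF sym cop_mem[OF sym yD] uS])
    then have "cnj (cinner (closure_op S T y) u) = cnj (cinner y (T u))" by simp
    then show ?thesis by (simp only: cinner_commute[of "closure_op S T y"] cinner_commute[of y] complex_cnj_cnj)
  qed
  show ?thesis by (rule adj_limit[OF hyp cop_mem[OF sym xD]])
qed

lemma cdom_in:
  "(x, z) \<in> closure (graph_op S T) \<Longrightarrow> x \<in> closure_dom S T"
proof -
  assume "(x, z) \<in> closure (graph_op S T)"
  then have "fst (x, z) \<in> fst ` closure (graph_op S T)" by (rule imageI)
  then show ?thesis by (simp add: closure_dom_def)
qed

theorem mainTheorem2: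
  fixes S :: "'a::{complex_inner, complete_space} set" and T :: "'a \<Rightarrow> 'a"
  assumes "symmetric_op S T"
    and "\<exists>\<phi>. adequate_approx_identity S T \<phi>"
  shows "ess_self_adjoint S T"
proof -
  note sym = assms(1)
  obtain \<phi> where ad: "adequate_approx_identity S T \<phi>" using assms(2) by blast
  let ?G = "closure (graph_op S T)"
  let ?D = "closure_dom S T"
  let ?A = "closure_op S T"
  have Gs: "csubspace ?G" by (rule Gamma_sub[OF sym])
  have G0: "(0, 0) \<in> ?G" using Gs unfolding csubspace_def by (simp add: zero_prod_def)
  have Gadd: "p \<in> ?G \<Longrightarrow> q \<in> ?G \<Longrightarrow> p + q \<in> ?G" for p q
    using Gs unfolding csubspace_def by blast
  have Gsc: "p \<in> ?G \<Longrightarrow> scaleC c p \<in> ?G" for c p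
    using Gs unfolding csubspace_def by blast
  have lin: "clinear_on ?D ?A"
    unfolding clinear_on_def csubspace_def
  proof (intro conjI ballI allI)
    show "0 \<in> ?D" by (rule cdom_in[OF G0])
  next
    fix x y assume x: "x \<in> ?D" and y: "y \<in> ?D"
    have "(x, ?A x) + (y, ?A y) \<in> ?G" by (rule Gadd[OF cop_mem[OF sym x] cop_mem[OF sym y]])
    then have s: "(x + y, ?A x + ?A y) \<in> ?G" by simp
    show "x + y \<in> ?D" by (rule cdom_in[OF s])
    show "?A (x + y) = ?A x + ?A y" by (rule cop_eq[OF sym s])
  next
    fix c x assume x: "x \<in> ?D"
    have "scaleC c (x, ?A x) \<in> ?G" by (rule Gsc[OF cop_mem[OF sym x]])
    then have s: "(scaleC c x, scaleC c (?A x)) \<in> ?G" by (simp only: scaleC_prod_simp)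
    show "scaleC c x \<in> ?D" by (rule cdom_in[OF s])
    show "?A (scaleC c x) = scaleC c (?A x)" by (rule cop_eq[OF sym s])
  qed
  have denseD: "closure ?D = UNIV"
  proof -
    have "closure S \<subseteq> closure ?D" by (rule closure_mono[OF S_cdom[OF sym]])
    then show ?thesis using sym_dense[OF sym] by auto
  qed
  have adjdom: "adj_dom ?D ?A = ?D"
  proof
    show "adj_dom ?D ?A \<subseteq> ?D"
    proof
      fix y assume "y \<in> adj_dom ?D ?A"
      then obtain z where z: "\<forall>x\<in>?D. cinner (?A x) y = cinner x z" unfolding adj_dom_def by blast
      have "\<forall>u\<in>S. cinner (T u) y = cinner u z"
      proof
        fix u assume u: "u \<in> S"
        have "u \<in> ?D" using S_cdom[OF sym] u by blast
        then have "cinner (?A u) y = cinner u z" using z by blast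
        then show "cinner (T u) y = cinner u z" using cop_S[OF sym u] by simp
      qed
      then have "y \<in> adj_dom S T" unfolding adj_dom_def by blast
      then show "y \<in> ?D" by (rule core[OF sym ad])
    qed
  next
    show "?D \<subseteq> adj_dom ?D ?A"
    proof
      fix y assume y: "y \<in> ?D"
      have "\<forall>x\<in>?D. cinner (?A x) y = cinner x (?A y)" using adjrel[OF sym y] by blast
      then show "y \<in> adj_dom ?D ?A" unfolding adj_dom_def by blast
    qed
  qed
  have adjop: "adj_op ?D ?A x = ?A x" if x: "x \<in> ?D" for x
  proof -
    let ?P = "\<lambda>z. \<forall>x'\<in>?D. cinner (?A x') x = cinner x' z"
    have P1: "?P (?A x)" using adjrel[OF sym x] by blast
    have P2: "?P (adj_op ?D ?A x)" unfolding adj_op_def by (rule someI[of ?P, OF P1])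
    have "cinner u (adj_op ?D ?A x - ?A x) = 0" if u: "u \<in> S" for u
    proof -
      have uD: "u \<in> ?D" using S_cdom[OF sym] u by blast
      have "cinner u (adj_op ?D ?A x) = cinner (?A u) x" using P2 uD by simp
      also have "\<dots> = cinner u (?A x)" using P1 uD by simp
      finally show ?thesis by (simp add: cinner_diff_right)
    qed
    then have "adj_op ?D ?A x - ?A x = 0" by (rule dense_orth_zero[OF sym_dense[OF sym]])
    then show ?thesis by simp
  qed
  show ?thesis
    unfolding ess_self_adjoint_def self_adjoint_op_def
    using lin denseD adjdom adjop by blast
qed

end
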